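(* For each $t\in[0,1)$ the operator $C_t\colon H(\mathbb{D})\to H(\mathbb{D})$ is a topological isomorphism of $H(\mathbb{D})$ onto itself (a continuous linear bijection with continuous inverse) and, hence, it is not compact.
   Context: $\mathbb{D}=\{z\in\mathbb{C}:|z|<1\}$ and $H(\mathbb{D})$ is the Fréchet space of holomorphic functions on $\mathbb{D}$ with the topology of uniform convergence on compact subsets. For $t\in[0,1]$, $C_t$ is defined on $f\in H(\mathbb{D})$ by $C_tf(0)=f(0)$ and $C_tf(z)=\frac{1}{z}\int_0^z\frac{f(\xi)}{1-t\xi}\,d\xi$ for $z\neq0$. A linear map $T$ between locally convex spaces is compact if some neighbourhood of $0$ is mapped onto a relatively compact set. *)

theory Defs
  imports "HOL-Complex_Analysis.Complex_Analysis"
begin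

text \<open>Elements of H(D) are represented as functions complex => complex that are holomorphic
  on the unit disc and (for uniqueness of representatives) vanish outside it.\<close>

definition HD :: "(complex \<Rightarrow> complex) set" where
  "HD = {f. f holomorphic_on ball 0 1 \<and> (\<forall>z. z \<notin> ball 0 1 \<longrightarrow> f z = 0)}"

definition HD_open :: "(complex \<Rightarrow> complex) set \<Rightarrow> bool" where
  "HD_open U \<longleftrightarrow> U \<subseteq> HD \<and>
     (\<forall>f\<in>U. \<exists>K e. compact K \<and> K \<subseteq> ball 0 1 \<and> e > 0 \<and>
        {g\<in>HD. \<forall>z\<in>K. cmod (g z - f z) < e} \<subseteq> U)"

lemma istopology_HD_open: "istopology HD_open"
  unfolding istopology_def
proof (intro conjI allI impI)
  fix S T assume S: "HD_open S" and T: "HD_open T"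
  show "HD_open (S \<inter> T)"
    unfolding HD_open_def
  proof (intro conjI ballI)
    show "S \<inter> T \<subseteq> HD" using S unfolding HD_open_def by blast
  next
    fix f assume f: "f \<in> S \<inter> T"
    obtain K1 e1 where 1: "compact K1" "K1 \<subseteq> ball 0 1" "e1 > 0"
        "{g\<in>HD. \<forall>z\<in>K1. cmod (g z - f z) < e1} \<subseteq> S"
      using S f unfolding HD_open_def by blast
    obtain K2 e2 where 2: "compact K2" "K2 \<subseteq> ball 0 1" "e2 > 0"
        "{g\<in>HD. \<forall>z\<in>K2. cmod (g z - f z) < e2} \<subseteq> T"
      using T f unfolding HD_open_def by blast
    show "\<exists>K e. compact K \<and> K \<subseteq> ball 0 1 \<and> e > 0 \<and>
        {g\<in>HD. \<forall>z\<in>K. cmod (g z - f z) < e} \<subseteq> S \<inter> T"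
    proof (intro exI conjI)
      show "compact (K1 \<union> K2)" using 1(1) 2(1) by (rule compact_Un)
      show "K1 \<union> K2 \<subseteq> ball 0 1" using 1(2) 2(2) by (rule Un_least)
      show "min e1 e2 > 0" using 1(3) 2(3) by simp
      show "{g\<in>HD. \<forall>z\<in>K1 \<union> K2. cmod (g z - f z) < min e1 e2} \<subseteq> S \<inter> T"
      proof
        fix g assume g: "g \<in> {g\<in>HD. \<forall>z\<in>K1 \<union> K2. cmod (g z - f z) < min e1 e2}"
        have "g \<in> {g\<in>HD. \<forall>z\<in>K1. cmod (g z - f z) < e1}" using g by simp
        then have "g \<in> S" using 1(4) by blast
        moreover have "g \<in> {g\<in>HD. \<forall>z\<in>K2. cmod (g z - f z) < e2}" using g by simp
        then have "g \<in> T" using 2(4) by blast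
        ultimately show "g \<in> S \<inter> T" by blast
      qed
    qed
  qed
next
  fix \<K> assume K: "\<forall>K\<in>\<K>. HD_open K"
  show "HD_open (\<Union>\<K>)"
    unfolding HD_open_def
  proof (intro conjI ballI)
    show "\<Union>\<K> \<subseteq> HD" using K unfolding HD_open_def by blast
  next
    fix f assume "f \<in> \<Union>\<K>"
    then obtain U where U: "U \<in> \<K>" "f \<in> U" by (rule UnionE)
    have "HD_open U" using K U(1) by (rule bspec)
    then obtain K0 e where "compact K0" "K0 \<subseteq> ball 0 1" "e > 0"
        "{g\<in>HD. \<forall>z\<in>K0. cmod (g z - f z) < e} \<subseteq> U"
      using U(2) unfolding HD_open_def by blast
    then show "\<exists>K e. compact K \<and> K \<subseteq> ball 0 1 \<and> e > 0 \<and>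
        {g\<in>HD. \<forall>z\<in>K. cmod (g z - f z) < e} \<subseteq> \<Union>\<K>"
      using U by blast
  qed
qed

definition HD_top :: "(complex \<Rightarrow> complex) topology" where
  "HD_top = topology HD_open"

definition Cesaro_op :: "real \<Rightarrow> (complex \<Rightarrow> complex) \<Rightarrow> complex \<Rightarrow> complex" where
  "Cesaro_op t f z =
     (if z = 0 then f 0
      else if z \<in> ball 0 1 then
        (1 / z) * contour_integral (linepath 0 z) (\<lambda>\<xi>. f \<xi> / (1 - of_real t * \<xi>))
      else 0)"

definition HD_linear :: "((complex \<Rightarrow> complex) \<Rightarrow> complex \<Rightarrow> complex) \<Rightarrow> bool" where
  "HD_linear T \<longleftrightarrow> (\<forall>f\<in>HD. \<forall>g\<in>HD. \<forall>a b::complex.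
      T (\<lambda>z. a * f z + b * g z) = (\<lambda>z. a * T f z + b * T g z))"

definition HD_compact_operator :: "((complex \<Rightarrow> complex) \<Rightarrow> complex \<Rightarrow> complex) \<Rightarrow> bool" where
  "HD_compact_operator T \<longleftrightarrow>
     (\<exists>U V. openin HD_top V \<and> (\<lambda>z. 0) \<in> V \<and> V \<subseteq> U \<and> U \<subseteq> topspace HD_top \<and>
        compactin HD_top (HD_top closure_of (T ` U)))"

end

theory Submission
  imports Defs
begin

lemma openin_HD_top: "openin HD_top = HD_open"
  unfolding HD_top_def using istopology_HD_open by simp

lemma topspace_HD_top: "topspace HD_top = HD"
proof -
  have "HD_open HD" unfolding HD_open_def
    by (intro conjI ballI exI[of _ "{}"] exI[of _ 1]) auto
  moreover have "\<And>U. HD_open U \<Longrightarrow> U \<subseteq> HD" by (simp add: HD_open_def)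
  ultimately show ?thesis unfolding topspace_def openin_HD_top by blast
qed

lemma HD_lin:
  assumes "f \<in> HD" "g \<in> HD"
  shows "(\<lambda>z. a * f z + b * g z) \<in> HD"
  using assms unfolding HD_def by (auto intro!: holomorphic_intros)

lemma HD_zero: "(\<lambda>z. 0) \<in> HD"
  unfolding HD_def by auto

lemma denom_bound:
  assumes "0 \<le> t" "t < 1" "cmod \<xi> \<le> 1"
  shows "cmod (1 - of_real t * \<xi>) \<ge> 1 - t"
proof -
  have "cmod (of_real t * \<xi>) = t * cmod \<xi>" using assms by (simp add: norm_mult)
  also have "\<dots> \<le> t" using assms by (simp add: mult_left_le)
  finally have "cmod (of_real t * \<xi>) \<le> t" .
  moreover have "cmod (1::complex) - cmod (of_real t * \<xi>) \<le> cmod (1 - of_real t * \<xi>)"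
    by (rule norm_triangle_ineq2)
  ultimately show ?thesis by simp
qed

lemma denom_nz:
  assumes "0 \<le> t" "t < 1" "cmod \<xi> \<le> 1"
  shows "1 - of_real t * \<xi> \<noteq> 0"
  using denom_bound[OF assms] assms by auto

lemma hol_h:
  assumes "0 \<le> t" "t < 1" "f \<in> HD"
  shows "(\<lambda>\<xi>. f \<xi> / (1 - of_real t * \<xi>)) holomorphic_on ball 0 1"
  using assms denom_nz[OF assms(1,2)] unfolding HD_def
  by (auto intro!: holomorphic_intros)

lemma Cesaro_repr:
  assumes "0 \<le> t" "t < 1" "f \<in> HD"
  obtains G where "\<And>x. x \<in> ball 0 1 \<Longrightarrow> (G has_field_derivative f x / (1 - of_real t * x)) (at x)"
    "G holomorphic_on ball 0 1"
    "\<And>z. z \<in> ball 0 1 \<Longrightarrow> Cesaro_op t f z = (if z = 0 then deriv G 0 else (G z - G 0) / (z - 0))"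
proof -
  obtain G where G: "\<And>x. x \<in> ball 0 1 \<Longrightarrow> (G has_field_derivative f x / (1 - of_real t * x)) (at x within ball 0 1)"
    by (rule holomorphic_convex_primitive'[OF convex_ball open_ball hol_h[OF assms]]) blast
  have G': "(G has_field_derivative f x / (1 - of_real t * x)) (at x)" if "x \<in> ball 0 1" for x
    using G[OF that] at_within_open[OF that open_ball] by metis
  have hol: "G holomorphic_on ball 0 1"
    unfolding holomorphic_on_def field_differentiable_def
    using G' has_field_derivative_at_within by blast
  have ci: "contour_integral (linepath 0 z) (\<lambda>\<xi>. f \<xi> / (1 - of_real t * \<xi>)) = G z - G 0"
    if "z \<in> ball 0 1" for z
  proof -
    have seg: "path_image (linepath 0 z) \<subseteq> ball 0 1"
      using that by (simp add: closed_segment_subset convex_ball)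
    have "((\<lambda>\<xi>. f \<xi> / (1 - of_real t * \<xi>)) has_contour_integral
           (G (pathfinish (linepath 0 z)) - G (pathstart (linepath 0 z)))) (linepath 0 z)"
      by (rule contour_integral_primitive[of "ball 0 1" G "\<lambda>\<xi>. f \<xi> / (1 - of_real t * \<xi>)", OF G valid_path_linepath seg])
    then have "((\<lambda>\<xi>. f \<xi> / (1 - of_real t * \<xi>)) has_contour_integral (G z - G 0)) (linepath 0 z)"
      by simp
    then show ?thesis by (rule contour_integral_unique)
  qed
  have d0: "deriv G 0 = f 0"
    using G'[of 0] by (simp add: DERIV_imp_deriv)
  have C: "Cesaro_op t f z = (if z = 0 then deriv G 0 else (G z - G 0) / (z - 0))"
    if z: "z \<in> ball 0 1" for z
    using z ci[OF z] d0 by (simp add: Cesaro_op_def)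
  show ?thesis by (rule that[OF G' hol C])
qed

lemma HD_intro: "f holomorphic_on ball 0 1 \<Longrightarrow> (\<And>z. z \<notin> ball 0 1 \<Longrightarrow> f z = 0) \<Longrightarrow> f \<in> HD"
  unfolding HD_def by blast

lemma Cesaro_out: "z \<notin> ball 0 1 \<Longrightarrow> Cesaro_op t f z = 0"
proof -
  assume z: "z \<notin> ball 0 1"
  then have "z \<noteq> 0" by auto
  with z show ?thesis unfolding Cesaro_op_def by simp
qed

lemma Cesaro_HD:
  assumes "0 \<le> t" "t < 1" "f \<in> HD"
  shows "Cesaro_op t f \<in> HD"
proof -
  obtain G where G0: "\<And>x. x \<in> ball 0 1 \<Longrightarrow> (G has_field_derivative f x / (1 - of_real t * x)) (at x)"
    and G: "G holomorphic_on ball 0 1"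
    "\<And>z. z \<in> ball 0 1 \<Longrightarrow> Cesaro_op t f z = (if z = 0 then deriv G 0 else (G z - G 0) / (z - 0))"
    by (rule Cesaro_repr[OF assms]) fast
  have "(\<lambda>z. if z = 0 then deriv G 0 else (G z - G 0) / (z - 0)) holomorphic_on ball 0 1"
    by (rule pole_lemma_open[OF G(1) open_ball])
  then have "Cesaro_op t f holomorphic_on ball 0 1"
    by (rule holomorphic_transform) (rule G(2)[symmetric])
  then show ?thesis by (rule HD_intro) (rule Cesaro_out)
qed

lemma Cesaro_integrable:
  assumes "0 \<le> t" "t < 1" "f \<in> HD" "z \<in> ball 0 1"
  shows "(\<lambda>\<xi>. f \<xi> / (1 - of_real t * \<xi>)) contour_integrable_on linepath 0 z"
proof -
  have "closed_segment 0 z \<subseteq> ball 0 1"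
    using assms(4) by (simp add: closed_segment_subset convex_ball)
  then show ?thesis
    by (intro contour_integrable_holomorphic_simple[OF hol_h[OF assms(1-3)] open_ball]) auto
qed

lemma Cesaro_linear:
  assumes "0 \<le> t" "t < 1"
  shows "HD_linear (Cesaro_op t)"
  unfolding HD_linear_def
proof (intro ballI allI ext)
  fix f g :: "complex \<Rightarrow> complex" and a b :: complex and z :: complex
  assume f: "f \<in> HD" and g: "g \<in> HD"
  show "Cesaro_op t (\<lambda>z. a * f z + b * g z) z = a * Cesaro_op t f z + b * Cesaro_op t g z"
  proof (cases "z = 0 \<or> z \<notin> ball 0 1")
    case True then show ?thesis by (auto simp: Cesaro_op_def)
  next
    case False
    then have z: "z \<noteq> 0" "z \<in> ball 0 1" by auto
    have "(\<lambda>\<xi>. (a * f \<xi> + b * g \<xi>) / (1 - of_real t * \<xi>)) =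
          (\<lambda>\<xi>. a * (f \<xi> / (1 - of_real t * \<xi>)) + b * (g \<xi> / (1 - of_real t * \<xi>)))"
      by (simp add: add_divide_distrib)
    note eqf = this
    let ?If = "contour_integral (linepath 0 z) (\<lambda>\<xi>. f \<xi> / (1 - of_real t * \<xi>))"
    let ?Ig = "contour_integral (linepath 0 z) (\<lambda>\<xi>. g \<xi> / (1 - of_real t * \<xi>))"
    have "((\<lambda>\<xi>. a * (f \<xi> / (1 - of_real t * \<xi>)) + b * (g \<xi> / (1 - of_real t * \<xi>)))
            has_contour_integral (a * ?If + b * ?Ig)) (linepath 0 z)"
      by (intro has_contour_integral_add has_contour_integral_lmul has_contour_integral_integral
          Cesaro_integrable[OF assms f z(2)] Cesaro_integrable[OF assms g z(2)])
    then have "contour_integral (linepath 0 z) (\<lambda>\<xi>. (a * f \<xi> + b * g \<xi>) / (1 - of_real t * \<xi>))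
       = a * ?If + b * ?Ig"
      unfolding eqf by (rule contour_integral_unique)
    then show ?thesis using z by (simp add: Cesaro_op_def algebra_simps)
  qed
qed

definition Inv_op :: "real \<Rightarrow> (complex \<Rightarrow> complex) \<Rightarrow> complex \<Rightarrow> complex" where
  "Inv_op t g z = (if z \<in> ball 0 1 then (1 - of_real t * z) * (g z + z * deriv g z) else 0)"

lemma Inv_HD:
  assumes "g \<in> HD"
  shows "Inv_op t g \<in> HD"
proof -
  have hg: "g holomorphic_on ball 0 1" using assms by (simp add: HD_def)
  have "(\<lambda>z. (1 - of_real t * z) * (g z + z * deriv g z)) holomorphic_on ball 0 1"
    using hg by (auto intro!: holomorphic_intros holomorphic_deriv)
  then have "Inv_op t g holomorphic_on ball 0 1"
    by (rule holomorphic_transform) (simp add: Inv_op_def)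
  then show ?thesis by (rule HD_intro) (simp add: Inv_op_def)
qed

lemma Cesaro_Inv:
  assumes "0 \<le> t" "t < 1" "g \<in> HD"
  shows "Cesaro_op t (Inv_op t g) = g"
proof
  fix z :: complex
  have hg: "g holomorphic_on ball 0 1" using assms by (simp add: HD_def)
  show "Cesaro_op t (Inv_op t g) z = g z"
  proof (cases "z = 0 \<or> z \<notin> ball 0 1")
    case True then show ?thesis using assms(3)
      by (auto simp: Cesaro_op_def Inv_op_def HD_def)
  next
    case False
    then have z: "z \<noteq> 0" "z \<in> ball 0 1" by auto
    have seg: "closed_segment 0 z \<subseteq> ball 0 1"
      using z by (simp add: closed_segment_subset convex_ball)
    have der: "((\<lambda>w. w * g w) has_field_derivative (Inv_op t g x / (1 - of_real t * x))) (at x within ball 0 1)"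
      if x: "x \<in> ball 0 1" for x
    proof -
      have nz: "1 - of_real t * x \<noteq> 0" using denom_nz[OF assms(1,2)] x by auto
      have "Inv_op t g x / (1 - of_real t * x) = 1 * g x + deriv g x * x"
        using x nz by (simp add: Inv_op_def)
      moreover have "((\<lambda>w. w * g w) has_field_derivative (1 * g x + deriv g x * x)) (at x within ball 0 1)"
        by (rule DERIV_mult[OF DERIV_ident holomorphic_derivI[OF hg open_ball x]])
      ultimately show ?thesis by simp
    qed
    have "contour_integral (linepath 0 z) (\<lambda>\<xi>. Inv_op t g \<xi> / (1 - of_real t * \<xi>)) = z * g z"
      using contour_integral_primitive[OF der valid_path_linepath, of 0 z] seg
      by (auto intro!: contour_integral_unique)
    then show ?thesis using z by (simp add: Cesaro_op_def)
  qed
qed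

lemma Inv_Cesaro:
  assumes "0 \<le> t" "t < 1" "f \<in> HD"
  shows "Inv_op t (Cesaro_op t f) = f"
proof
  fix x :: complex
  obtain G where G: "\<And>x. x \<in> ball 0 1 \<Longrightarrow> (G has_field_derivative f x / (1 - of_real t * x)) (at x)"
    and "G holomorphic_on ball 0 1" and G2: "\<And>z. z \<in> ball 0 1 \<Longrightarrow> Cesaro_op t f z = (if z = 0 then deriv G 0 else (G z - G 0) / (z - 0))"
    by (rule Cesaro_repr[OF assms]) fast
  let ?g = "Cesaro_op t f"
  have hg: "?g holomorphic_on ball 0 1" using Cesaro_HD[OF assms] by (simp add: HD_def)
  show "Inv_op t ?g x = f x"
  proof (cases "x \<in> ball 0 1")
    case False then show ?thesis using assms(3) by (auto simp: Inv_op_def HD_def)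
  next
    case x: True
    have eq: "z * ?g z = G z - G 0" if "z \<in> ball 0 1" for z
      using G2[OF that] by (cases "z = 0") auto
    have d1: "((\<lambda>w. w * ?g w) has_field_derivative (1 * ?g x + deriv ?g x * x)) (at x)"
      by (rule DERIV_mult[OF DERIV_ident holomorphic_derivI[OF hg open_ball x]])
    have "((\<lambda>w. G w - G 0) has_field_derivative f x / (1 - of_real t * x)) (at x)"
      using G(1)[OF x] by (auto intro!: derivative_eq_intros)
    then have d2: "((\<lambda>w. w * ?g w) has_field_derivative f x / (1 - of_real t * x)) (at x)"
      by (rule has_field_derivative_transform_within_open[OF _ open_ball x]) (simp add: eq)
    have "?g x + x * deriv ?g x = f x / (1 - of_real t * x)"
      using DERIV_unique[OF d1 d2] by (simp add: mult.commute)
    moreover have "1 - of_real t * x \<noteq> 0" using denom_nz[OF assms(1,2)] x by auto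
    ultimately show ?thesis using x by (simp add: Inv_op_def)
  qed
qed

lemma compact_in_ball:
  fixes K :: "complex set"
  assumes "compact K" "K \<subseteq> ball 0 1"
  obtains r :: real where "1/2 \<le> r" "r < 1" "K \<subseteq> cball 0 r"
proof (cases "K = {}")
  case True
  show ?thesis by (rule that[of "1/2"]) (auto simp: True)
next
  case False
  obtain x where x: "x \<in> K" "\<forall>y\<in>K. norm y \<le> norm x"
    using continuous_attains_sup[OF assms(1) False, of norm] continuous_on_norm_id by blast
  have "norm x < 1" using x(1) assms(2) by auto
  show ?thesis
  proof (rule that[of "max (1/2) (norm x)"])
    show "K \<subseteq> cball 0 (max (1/2) (norm x))"
      using x(2) by (auto simp: subset_iff)
  qed (use \<open>norm x < 1\<close> in auto)
qed

lemma cont_from_bound: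
  assumes TH: "\<And>f. f \<in> HD \<Longrightarrow> T f \<in> HD" and lin: "HD_linear T"
    and bnd: "\<And>K. compact K \<Longrightarrow> K \<subseteq> ball 0 1 \<Longrightarrow> \<exists>K' M. compact K' \<and> K' \<subseteq> ball 0 1 \<and> M > 0 \<and>
       (\<forall>f\<in>HD. \<forall>\<delta>>0. (\<forall>w\<in>K'. cmod (f w) \<le> \<delta>) \<longrightarrow> (\<forall>z\<in>K. cmod (T f z) \<le> M * \<delta>))"
  shows "continuous_map HD_top HD_top T"
  unfolding continuous_map_def topspace_HD_top openin_HD_top
proof (intro conjI allI impI)
  show "T \<in> HD \<rightarrow> HD" using TH by (rule Pi_I)
next
  fix U assume U: "HD_open U"
  show "HD_open {x \<in> HD. T x \<in> U}"
    unfolding HD_open_def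
  proof (intro conjI ballI)
    show "{x \<in> HD. T x \<in> U} \<subseteq> HD" by (rule Collect_restrict)
  next
    fix f assume f: "f \<in> {x \<in> HD. T x \<in> U}"
    then have fH: "f \<in> HD" and TfU: "T f \<in> U" by simp_all
    have "\<forall>f\<in>U. \<exists>K e. compact K \<and> K \<subseteq> ball 0 1 \<and> e > 0 \<and>
        {g\<in>HD. \<forall>z\<in>K. cmod (g z - f z) < e} \<subseteq> U"
      using U unfolding HD_open_def by (rule conjunct2)
    then have "\<exists>K e. compact K \<and> K \<subseteq> ball 0 1 \<and> e > 0 \<and>
        {g\<in>HD. \<forall>z\<in>K. cmod (g z - T f z) < e} \<subseteq> U"
      using TfU by (rule bspec)
    then obtain K e where K: "compact K" "K \<subseteq> ball 0 1" "e > 0"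
      and KU: "{g\<in>HD. \<forall>z\<in>K. cmod (g z - T f z) < e} \<subseteq> U"
      by (elim exE conjE)
    obtain K' M where K': "compact K'" "K' \<subseteq> ball 0 1" "M > 0"
      and B: "\<forall>f\<in>HD. \<forall>\<delta>>0. (\<forall>w\<in>K'. cmod (f w) \<le> \<delta>) \<longrightarrow> (\<forall>z\<in>K. cmod (T f z) \<le> M * \<delta>)"
      using bnd[OF K(1,2)] by (elim exE conjE)
    show "\<exists>K e. compact K \<and> K \<subseteq> ball 0 1 \<and> e > 0 \<and>
        {g\<in>HD. \<forall>z\<in>K. cmod (g z - f z) < e} \<subseteq> {x \<in> HD. T x \<in> U}"
    proof (intro exI conjI)
      show "compact K'" by (rule K'(1))
      show "K' \<subseteq> ball 0 1" by (rule K'(2))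
      show "e / (2 * M) > 0" using K(3) K'(3) by simp
      show "{g\<in>HD. \<forall>z\<in>K'. cmod (g z - f z) < e / (2 * M)} \<subseteq> {x \<in> HD. T x \<in> U}"
      proof
        fix g assume g: "g \<in> {g\<in>HD. \<forall>z\<in>K'. cmod (g z - f z) < e / (2 * M)}"
        then have gH: "g \<in> HD" and gK: "\<forall>z\<in>K'. cmod (g z - f z) < e / (2 * M)" by simp_all
        let ?h = "\<lambda>z. 1 * g z + (-1) * f z"
        have hH: "?h \<in> HD" by (rule HD_lin[OF gH fH])
        have Th: "T ?h = (\<lambda>z. 1 * T g z + (-1) * T f z)"
          by (rule lin[unfolded HD_linear_def, rule_format, OF gH fH])
        have hb: "\<forall>w\<in>K'. cmod (?h w) \<le> e / (2 * M)"
        proof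
          fix w assume "w \<in> K'"
          then have "cmod (g w - f w) < e / (2 * M)" using gK by simp
          then show "cmod (?h w) \<le> e / (2 * M)" by simp
        qed
        have ep: "e / (2 * M) > 0" using K(3) K'(3) by simp
        have bb: "\<forall>z\<in>K. cmod (T ?h z) \<le> M * (e / (2 * M))"
          by (intro ballI) (rule B[rule_format, OF hH ep bspec[OF hb]])
        have lt: "M * (e / (2 * M)) < e" using K(3) K'(3) by simp
        have "\<forall>z\<in>K. cmod (T g z - T f z) < e"
        proof
          fix z assume z: "z \<in> K"
          have "cmod (T ?h z) \<le> M * (e / (2 * M))" using bb z by simp
          then have "cmod (T g z - T f z) \<le> M * (e / (2 * M))" unfolding Th by simp
          then show "cmod (T g z - T f z) < e" using lt by linarith
        qed
        then have "T g \<in> {g\<in>HD. \<forall>z\<in>K. cmod (g z - T f z) < e}" using TH[OF gH] by simp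
        then have "T g \<in> U" using KU by (rule subsetD[rotated])
        then show "g \<in> {x \<in> HD. T x \<in> U}" using gH by simp
      qed
    qed
  qed
qed

lemma Cesaro_bound:
  assumes t: "0 \<le> t" "t < 1" and K: "compact K" "K \<subseteq> ball 0 1"
  shows "\<exists>K' M. compact K' \<and> K' \<subseteq> ball 0 1 \<and> M > 0 \<and>
       (\<forall>f\<in>HD. \<forall>\<delta>>0. (\<forall>w\<in>K'. cmod (f w) \<le> \<delta>) \<longrightarrow> (\<forall>z\<in>K. cmod (Cesaro_op t f z) \<le> M * \<delta>))"
proof -
  obtain r :: real where r: "1/2 \<le> r" "r < 1" "K \<subseteq> cball 0 r"
    by (rule compact_in_ball[OF K])
  have sub: "cball 0 r \<subseteq> ball (0::complex) 1" using r by auto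
  show ?thesis
  proof (intro exI conjI ballI allI impI)
    show "compact (cball (0::complex) r)" by simp
    show "cball 0 r \<subseteq> ball (0::complex) 1" by (rule sub)
    show "1 / (1 - t) > 0" using t by simp
    fix f :: "complex \<Rightarrow> complex" and \<delta> :: real and z
    assume f: "f \<in> HD" and d: "\<delta> > 0" and fb: "\<forall>w\<in>cball 0 r. cmod (f w) \<le> \<delta>" and z: "z \<in> K"
    have zr: "z \<in> cball 0 r" using z r(3) by auto
    have zb: "z \<in> ball 0 1" using zr sub by auto
    have dd: "\<delta> \<le> 1 / (1 - t) * \<delta>" using t d by (simp add: field_simps)
    show "cmod (Cesaro_op t f z) \<le> 1 / (1 - t) * \<delta>"
    proof (cases "z = 0")
      case True
      have "cmod (f 0) \<le> \<delta>" using fb r by auto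
      then show ?thesis using True dd by (simp add: Cesaro_op_def)
    next
      case False
      have hb: "cmod (f x / (1 - of_real t * x)) \<le> \<delta> / (1 - t)"
        if x: "x \<in> closed_segment 0 z" for x
      proof -
        have "closed_segment 0 z \<subseteq> cball 0 r"
          using zr r by (intro closed_segment_subset) auto
        then have xr: "x \<in> cball 0 r" using x by auto
        then have x1: "cmod x \<le> 1" using r by auto
        have den: "1 - t \<le> cmod (1 - of_real t * x)" by (rule denom_bound[OF t x1])
        have fx: "cmod (f x) \<le> \<delta>" using fb xr by auto
        have "cmod (f x / (1 - of_real t * x)) = cmod (f x) / cmod (1 - of_real t * x)"
          by (simp add: norm_divide)
        also have "\<dots> \<le> \<delta> / (1 - t)"
          by (rule frac_le) (use fx den t d in auto)
        finally show ?thesis .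
      qed
      have "cmod (contour_integral (linepath 0 z) (\<lambda>\<xi>. f \<xi> / (1 - of_real t * \<xi>))) \<le> \<delta> / (1 - t) * cmod (z - 0)"
        by (rule has_contour_integral_bound_linepath[OF has_contour_integral_integral[OF Cesaro_integrable[OF t f zb]]])
           (use t d hb in auto)
      then show ?thesis using False zb
        by (simp add: Cesaro_op_def norm_divide norm_mult field_simps)
    qed
  qed
qed

lemma Inv_bound:
  assumes t: "0 \<le> t" "t < 1" and K: "compact K" "K \<subseteq> ball 0 1"
  shows "\<exists>K' M. compact K' \<and> K' \<subseteq> ball 0 1 \<and> M > 0 \<and>
       (\<forall>f\<in>HD. \<forall>\<delta>>0. (\<forall>w\<in>K'. cmod (f w) \<le> \<delta>) \<longrightarrow> (\<forall>z\<in>K. cmod (Inv_op t f z) \<le> M * \<delta>))"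
proof -
  obtain r :: real where r: "1/2 \<le> r" "r < 1" "K \<subseteq> cball 0 r"
    by (rule compact_in_ball[OF K])
  define \<rho> where "\<rho> = (1 - r) / 2"
  have e1: "r + \<rho> = (1 + r) / 2" unfolding \<rho>_def by (simp add: field_simps)
  have \<rho>: "\<rho> > 0" "r + \<rho> < 1" using r unfolding e1 unfolding \<rho>_def by (auto simp: field_simps)
  have sub: "cball 0 (r + \<rho>) \<subseteq> ball (0::complex) 1" using \<rho> by auto
  show ?thesis
  proof (intro exI conjI ballI allI impI)
    show "compact (cball (0::complex) (r + \<rho>))" by simp
    show "cball 0 (r + \<rho>) \<subseteq> ball (0::complex) 1" by (rule sub)
    show "2 * (1 + 1 / \<rho>) > 0" using \<rho> by (simp add: add_pos_pos)
    fix f :: "complex \<Rightarrow> complex" and \<delta> :: real and z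
    assume f: "f \<in> HD" and d: "\<delta> > 0" and fb: "\<forall>w\<in>cball 0 (r + \<rho>). cmod (f w) \<le> \<delta>" and z: "z \<in> K"
    have hf: "f holomorphic_on ball 0 1" using f by (simp add: HD_def)
    have zr: "cmod z \<le> r" using z r(3) by auto
    have zb: "z \<in> ball 0 1" using zr r by auto
    have cb: "cball z \<rho> \<subseteq> cball 0 (r + \<rho>)"
    proof
      fix y assume "y \<in> cball z \<rho>"
      then have "cmod (y - z) \<le> \<rho>" by (simp add: dist_norm norm_minus_commute)
      then have "cmod y \<le> r + \<rho>" using zr norm_triangle_ineq[of z "y - z"] by simp
      then show "y \<in> cball 0 (r + \<rho>)" by simp
    qed
    have fz: "cmod (f z) \<le> \<delta>" using fb cb \<rho> by (auto simp: subset_iff)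
    have "norm ((deriv ^^ 1) f z) \<le> (fact 1) * \<delta> / \<rho> ^ 1"
    proof (rule Cauchy_inequality)
      show "f holomorphic_on ball z \<rho>"
        using hf cb sub by (meson ball_subset_cball holomorphic_on_subset order_trans)
      show "continuous_on (cball z \<rho>) f"
        using holomorphic_on_imp_continuous_on[OF hf] cb sub by (meson continuous_on_subset order_trans)
      show "0 < \<rho>" by (rule \<rho>(1))
      fix x assume "norm (z - x) = \<rho>"
      then have "x \<in> cball z \<rho>" by (simp add: dist_norm)
      then show "norm (f x) \<le> \<delta>" using fb cb by auto
    qed
    then have fd: "cmod (deriv f z) \<le> \<delta> / \<rho>" by simp
    have "cmod (1 - of_real t * z) \<le> 1 + cmod (of_real t * z)" using norm_triangle_ineq4[of "1::complex" "of_real t * z"] by simp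
    also have "cmod (of_real t * z) \<le> 1" using t zb by (simp add: norm_mult mult_le_one less_imp_le)
    finally have den: "cmod (1 - of_real t * z) \<le> 2" by simp
    have "cmod (f z + z * deriv f z) \<le> cmod (f z) + cmod z * cmod (deriv f z)"
      by (metis norm_mult norm_triangle_ineq)
    also have "\<dots> \<le> \<delta> + 1 * (\<delta> / \<rho>)"
      using fz fd zb by (intro add_mono mult_mono) auto
    finally have num: "cmod (f z + z * deriv f z) \<le> \<delta> + \<delta> / \<rho>" by simp
    have "cmod (Inv_op t f z) = cmod (1 - of_real t * z) * cmod (f z + z * deriv f z)"
      using zb by (simp add: Inv_op_def norm_mult)
    also have "\<dots> \<le> 2 * (\<delta> + \<delta> / \<rho>)"
      using den num by (intro mult_mono) auto
    also have "\<dots> = 2 * (1 + 1 / \<rho>) * \<delta>" by (simp add: field_simps)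
    finally show "cmod (Inv_op t f z) \<le> 2 * (1 + 1 / \<rho>) * \<delta>" .
  qed
qed

lemma Inv_linear:
  assumes t: "0 \<le> t" "t < 1"
  shows "HD_linear (Inv_op t)"
  unfolding HD_linear_def
proof (intro ballI allI)
  fix f g :: "complex \<Rightarrow> complex" and a b :: complex
  assume f: "f \<in> HD" and g: "g \<in> HD"
  have fi: "Inv_op t f \<in> HD" and gi: "Inv_op t g \<in> HD" using Inv_HD f g by auto
  have hH: "(\<lambda>z. a * Inv_op t f z + b * Inv_op t g z) \<in> HD" by (rule HD_lin[OF fi gi])
  have "Cesaro_op t (\<lambda>z. a * Inv_op t f z + b * Inv_op t g z)
        = (\<lambda>z. a * Cesaro_op t (Inv_op t f) z + b * Cesaro_op t (Inv_op t g) z)"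
    by (rule Cesaro_linear[OF t, unfolded HD_linear_def, rule_format, OF fi gi])
  also have "\<dots> = (\<lambda>z. a * f z + b * g z)"
    using Cesaro_Inv[OF t f] Cesaro_Inv[OF t g] by simp
  finally have "Inv_op t (\<lambda>z. a * f z + b * g z)
      = Inv_op t (Cesaro_op t (\<lambda>z. a * Inv_op t f z + b * Inv_op t g z))" by simp
  also have "\<dots> = (\<lambda>z. a * Inv_op t f z + b * Inv_op t g z)"
    by (rule Inv_Cesaro[OF t hH])
  finally show "Inv_op t (\<lambda>z. a * f z + b * g z) = (\<lambda>z. a * Inv_op t f z + b * Inv_op t g z)" .
qed

lemma nbhd_not_compact:
  assumes K: "compact K" "K \<subseteq> ball 0 1" and e: "e > 0"
    and WS: "{g\<in>HD. \<forall>z\<in>K. cmod (g z) < e} \<subseteq> S" and S: "compactin HD_top S"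
  shows False
proof -
  obtain r :: real where r: "1/2 \<le> r" "r < 1" "K \<subseteq> cball 0 r"
    by (rule compact_in_ball[OF K])
  define \<rho> where "\<rho> = (1 + r) / 2"
  have \<rho>: "r < \<rho>" "\<rho> < 1" using r unfolding \<rho>_def by (auto simp: field_simps)
  define z0 where "z0 = complex_of_real \<rho>"
  have z0n: "cmod z0 = \<rho>" using \<rho> r unfolding z0_def by simp
  define Op where "Op = (\<lambda>n::nat. {g\<in>HD. cmod (g z0) < real n})"
  have Oopen: "openin HD_top (Op n)" for n
    unfolding openin_HD_top HD_open_def
  proof (intro conjI ballI)
    show "Op n \<subseteq> HD" unfolding Op_def by (rule Collect_restrict)
  next
    fix f assume f: "f \<in> Op n"
    then have fH: "f \<in> HD" and fn: "cmod (f z0) < real n" unfolding Op_def by simp_all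
    show "\<exists>K e. compact K \<and> K \<subseteq> ball 0 1 \<and> e > 0 \<and> {g\<in>HD. \<forall>z\<in>K. cmod (g z - f z) < e} \<subseteq> Op n"
    proof (intro exI conjI)
      show "compact {z0}" by simp
      show "{z0} \<subseteq> ball 0 1" using z0n \<rho> by simp
      show "real n - cmod (f z0) > 0" using fn by simp
      show "{g\<in>HD. \<forall>z\<in>{z0}. cmod (g z - f z) < real n - cmod (f z0)} \<subseteq> Op n"
      proof
        fix g assume "g \<in> {g\<in>HD. \<forall>z\<in>{z0}. cmod (g z - f z) < real n - cmod (f z0)}"
        then have gH: "g \<in> HD" and gd: "cmod (g z0 - f z0) < real n - cmod (f z0)" by simp_all
        have "cmod (g z0) \<le> cmod (g z0 - f z0) + cmod (f z0)"
          using norm_triangle_ineq[of "g z0 - f z0" "f z0"] by simp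
        then have "cmod (g z0) < real n" using gd by linarith
        then show "g \<in> Op n" using gH unfolding Op_def by simp
      qed
    qed
  qed
  have Ssub: "S \<subseteq> HD" using compactin_subset_topspace[OF S] topspace_HD_top by simp
  have cover: "S \<subseteq> \<Union>(range Op)"
  proof
    fix g assume "g \<in> S"
    then have gH: "g \<in> HD" using Ssub by auto
    obtain n :: nat where "cmod (g z0) < real n" using reals_Archimedean2 by blast
    then have "g \<in> Op n" using gH unfolding Op_def by simp
    then show "g \<in> \<Union>(range Op)" by blast
  qed
  have "\<exists>F. finite F \<and> F \<subseteq> range Op \<and> S \<subseteq> \<Union>F"
  proof -
    have "\<forall>\<U>. (\<forall>U \<in> \<U>. openin HD_top U) \<and> S \<subseteq> \<Union>\<U>
          \<longrightarrow> (\<exists>\<F>. finite \<F> \<and> \<F> \<subseteq> \<U> \<and> S \<subseteq> \<Union>\<F>)"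
      using S unfolding compactin_def by (rule conjunct2)
    then have "(\<forall>U \<in> range Op. openin HD_top U) \<and> S \<subseteq> \<Union>(range Op)
          \<longrightarrow> (\<exists>\<F>. finite \<F> \<and> \<F> \<subseteq> range Op \<and> S \<subseteq> \<Union>\<F>)"
      by (rule spec)
    moreover have "(\<forall>U \<in> range Op. openin HD_top U) \<and> S \<subseteq> \<Union>(range Op)"
      using Oopen cover by auto
    ultimately show ?thesis by (rule mp)
  qed
  then obtain F where F: "finite F" "F \<subseteq> range Op" "S \<subseteq> \<Union>F" by blast
  obtain N where N: "N \<subseteq> (UNIV::nat set)" "finite N" "F = Op ` N"
    using finite_subset_image[OF F(1) F(2)] by blast
  define n0 where "n0 = Max (insert 0 N)"
  have bound: "cmod (g z0) < real n0" if gS: "g \<in> S" for g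
  proof -
    obtain n where n: "n \<in> N" "g \<in> Op n" using F(3) N(3) gS by blast
    have "n \<le> n0" unfolding n0_def using N(2) n(1) by simp
    then show ?thesis using n(2) unfolding Op_def by force
  qed
  have q: "\<rho> / r > 1" using \<rho> r by (simp add: field_simps)
  obtain m :: nat where m: "2 * real n0 / e < (\<rho> / r) ^ m"
    using real_arch_pow[OF q] by blast
  define c where "c = e / (2 * r ^ m)"
  have rpos: "r > 0" using r by simp
  have cpos: "c > 0" unfolding c_def using e rpos by simp
  define g where "g = (\<lambda>z::complex. if z \<in> ball 0 1 then complex_of_real c * z ^ m else 0)"
  have gH: "g \<in> HD"
  proof (rule HD_intro)
    have "(\<lambda>z. complex_of_real c * z ^ m) holomorphic_on ball 0 1" by (intro holomorphic_intros)
    then show "g holomorphic_on ball 0 1"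
      by (rule holomorphic_transform) (simp add: g_def)
  qed (simp add: g_def)
  have "\<forall>z\<in>K. cmod (g z) < e"
  proof
    fix z assume z: "z \<in> K"
    then have zb: "z \<in> ball 0 1" and zr: "cmod z \<le> r" using K r by auto
    have "cmod (g z) = c * cmod z ^ m" using zb cpos by (simp add: g_def norm_mult norm_power)
    also have "\<dots> \<le> c * r ^ m" using zr cpos by (intro mult_left_mono power_mono) auto
    also have "\<dots> = e / 2" unfolding c_def using rpos by simp
    also have "\<dots> < e" using e by simp
    finally show "cmod (g z) < e" .
  qed
  then have "g \<in> S" using WS gH by blast
  then have lt: "cmod (g z0) < real n0" by (rule bound)
  have z0b: "z0 \<in> ball 0 1" using z0n \<rho> by simp
  have "cmod (g z0) = c * \<rho> ^ m" using z0b z0n cpos by (simp add: g_def norm_mult norm_power)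
  also have "\<dots> = e / 2 * (\<rho> / r) ^ m" unfolding c_def using rpos by (simp add: power_divide)
  finally have "cmod (g z0) = e / 2 * (\<rho> / r) ^ m" .
  moreover have "e / 2 * (\<rho> / r) ^ m > real n0"
  proof -
    have "2 * real n0 < e * (\<rho> / r) ^ m" using m e by (simp add: field_simps)
    then show ?thesis by simp
  qed
  ultimately show False using lt by simp
qed

theorem proposition3p3:
  fixes t :: real
  assumes "0 \<le> t" and "t < 1"
  shows "Cesaro_op t ` HD \<subseteq> HD \<and> HD_linear (Cesaro_op t)
    \<and> homeomorphic_map HD_top HD_top (Cesaro_op t)
    \<and> \<not> HD_compact_operator (Cesaro_op t)"
proof -
  note t = assms
  have img: "Cesaro_op t ` HD \<subseteq> HD" by (rule image_subsetI) (rule Cesaro_HD[OF t])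
  have lin: "HD_linear (Cesaro_op t)" by (rule Cesaro_linear[OF t])
  have c1: "continuous_map HD_top HD_top (Cesaro_op t)"
    by (rule cont_from_bound[OF Cesaro_HD[OF t] lin Cesaro_bound[OF t]])
  have c2: "continuous_map HD_top HD_top (Inv_op t)"
    by (rule cont_from_bound[OF Inv_HD Inv_linear[OF t] Inv_bound[OF t]])
  have "homeomorphic_maps HD_top HD_top (Cesaro_op t) (Inv_op t)"
    unfolding homeomorphic_maps_def topspace_HD_top
    by (intro conjI c1 c2 ballI Inv_Cesaro[OF t] Cesaro_Inv[OF t])
  then have hom: "homeomorphic_map HD_top HD_top (Cesaro_op t)"
    unfolding homeomorphic_map_maps by blast
  have zero: "Cesaro_op t (\<lambda>z. 0) = (\<lambda>z. 0)"
  proof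
    fix z show "Cesaro_op t (\<lambda>z. 0) z = 0" by (simp add: Cesaro_op_def)
  qed
  have nc: "\<not> HD_compact_operator (Cesaro_op t)"
  proof
    assume "HD_compact_operator (Cesaro_op t)"
    then obtain U V where V: "openin HD_top V" "(\<lambda>z. 0) \<in> V" "V \<subseteq> U" "U \<subseteq> topspace HD_top"
      and C: "compactin HD_top (HD_top closure_of (Cesaro_op t ` U))"
      unfolding HD_compact_operator_def by (elim exE conjE)
    have "openin HD_top (Cesaro_op t ` V)"
      by (rule homeomorphic_imp_open_map[OF hom, unfolded open_map_def, rule_format, OF V(1)])
    then have op: "HD_open (Cesaro_op t ` V)" by (simp add: openin_HD_top)
    have "(\<lambda>z. 0) \<in> Cesaro_op t ` V" using V(2) zero by (metis image_eqI)
    then have "\<exists>K e. compact K \<and> K \<subseteq> ball 0 1 \<and> e > 0 \<and>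
        {g\<in>HD. \<forall>z\<in>K. cmod (g z - (\<lambda>z. 0) z) < e} \<subseteq> Cesaro_op t ` V"
      by (rule bspec[OF conjunct2[OF op[unfolded HD_open_def]]])
    then obtain K e where K: "compact K" "K \<subseteq> ball 0 1" "e > 0"
      and KV: "{g\<in>HD. \<forall>z\<in>K. cmod (g z - (\<lambda>z. 0) z) < e} \<subseteq> Cesaro_op t ` V"
      by (elim exE conjE)
    have sub1: "Cesaro_op t ` U \<subseteq> topspace HD_top"
      using V(4) img topspace_HD_top by auto
    have KV': "{g\<in>HD. \<forall>z\<in>K. cmod (g z) < e} \<subseteq> Cesaro_op t ` V" using KV by simp
    have VU: "Cesaro_op t ` V \<subseteq> Cesaro_op t ` U" using V(3) by (rule image_mono)
    have "{g\<in>HD. \<forall>z\<in>K. cmod (g z) < e} \<subseteq> HD_top closure_of (Cesaro_op t ` U)"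
      using KV' VU closure_of_subset[OF sub1] by (meson order_trans)
    then show False by (rule nbhd_not_compact[OF K _ C])
  qed
  show ?thesis using img lin hom nc by (intro conjI)
qed

end
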